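(* Let $G$ be an undirected graph (a digraph with symmetric edge relation, loops allowed). (i) If every connected component of $G$ is either trivial or a complete graph with loops, then $\mathbb{A}(G)$ satisfies every bracketing identity. (ii) If every connected component of $G$ is either trivial, a complete graph with loops, or a complete bipartite graph, and the last case occurs at least once, then $\mathbb{A}(G)$ satisfies a nontrivial bracketing identity $t\approx t'$ ($t,t'\in B_n$, $t\ne t'$) if and only if $M_{t,t'}$ is even. (iii) Otherwise $\mathbb{A}(G)$ satisfies no nontrivial bracketing identity.
   Context: A connected component is trivial if it is a single vertex without a loop. A complete graph with loops on a vertex set $K$ has edge set $K\times K$; a complete bipartite graph on $K$ has $K=A\cup B$ with $A,B$ nonempty and disjoint and edge set $(A\times B)\cup(B\times A)$. The graph algebra $\mathbb{A}(G)$ is the groupoid on $V\cup\{\infty\}$ with $xy=x$ if $x,y\in V$ and $(x,y)\in E$, and $xy=\infty$ otherwise; it satisfies $t\approx t'$ if $t,t'$ induce the same term operation. $B_n$ is the set of binary terms in which $x_1,\dots,x_n$ each occur once in this order. For $t\in B_n$, the rooted tree $G(t)$ is defined recursively: $G(x_i)$ is the single vertex $x_i$; $G(t_1t_2)$ is $G(t_1)\cup G(t_2)$ plus an edge from the leftmost variable of $t_1$ to the leftmost variable of $t_2$; root $x_1$. With $T=G(t)$, $T'=G(t')$ and $d_T(x)$ the depth of $x$ in $T$, $M_{t,t'}=\gcd\{|d_T(x)-d_{T'}(x)|:x\in\{x_1,\dots,x_n\}\}$. *)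

theory Defs
  imports Main
begin

definition undirected_graph :: "'a set \<Rightarrow> ('a \<times> 'a) set \<Rightarrow> bool" where
  "undirected_graph V E \<longleftrightarrow> E \<subseteq> V \<times> V \<and> sym E"

definition component :: "('a \<times> 'a) set \<Rightarrow> 'a \<Rightarrow> 'a set" where
  "component E v = {w. (v, w) \<in> E\<^sup>*}"

definition components :: "'a set \<Rightarrow> ('a \<times> 'a) set \<Rightarrow> 'a set set" where
  "components V E = component E ` V"

definition trivial_comp :: "('a \<times> 'a) set \<Rightarrow> 'a set \<Rightarrow> bool" where
  "trivial_comp E K \<longleftrightarrow> (\<exists>v. K = {v} \<and> (v, v) \<notin> E)"

definition complete_loops_comp :: "('a \<times> 'a) set \<Rightarrow> 'a set \<Rightarrow> bool" where
  "complete_loops_comp E K \<longleftrightarrow> E \<inter> (K \<times> K) = K \<times> K"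

definition complete_bipartite_comp :: "('a \<times> 'a) set \<Rightarrow> 'a set \<Rightarrow> bool" where
  "complete_bipartite_comp E K \<longleftrightarrow>
     (\<exists>A B. A \<noteq> {} \<and> B \<noteq> {} \<and> A \<inter> B = {} \<and> K = A \<union> B \<and>
            E \<inter> (K \<times> K) = (A \<times> B) \<union> (B \<times> A))"

section \<open>The graph algebra A(G) on V \<union> {\<infinity>} (\<infinity> represented by None)\<close>

definition ga_carrier :: "'a set \<Rightarrow> 'a option set" where
  "ga_carrier V = Some ` V \<union> {None}"

fun ga_mult :: "('a \<times> 'a) set \<Rightarrow> 'a option \<Rightarrow> 'a option \<Rightarrow> 'a option" where
  "ga_mult E (Some x) (Some y) = (if (x, y) \<in> E then Some x else None)"
| "ga_mult E _ _ = None"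

datatype bterm = Var nat | Mul bterm bterm

fun eval :: "('a \<times> 'a) set \<Rightarrow> (nat \<Rightarrow> 'a option) \<Rightarrow> bterm \<Rightarrow> 'a option" where
  "eval E \<rho> (Var i) = \<rho> i"
| "eval E \<rho> (Mul t1 t2) = ga_mult E (eval E \<rho> t1) (eval E \<rho> t2)"

definition satisfies :: "'a set \<Rightarrow> ('a \<times> 'a) set \<Rightarrow> bterm \<Rightarrow> bterm \<Rightarrow> bool" where
  "satisfies V E t t' \<longleftrightarrow>
     (\<forall>\<rho>. (\<forall>i. \<rho> i \<in> ga_carrier V) \<longrightarrow> eval E \<rho> t = eval E \<rho> t')"

fun leaves :: "bterm \<Rightarrow> nat list" where
  "leaves (Var i) = [i]"
| "leaves (Mul t1 t2) = leaves t1 @ leaves t2"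

definition B :: "nat \<Rightarrow> bterm set" where
  "B n = {t. leaves t = [1..<Suc n]}"

fun leftmost :: "bterm \<Rightarrow> nat" where
  "leftmost (Var i) = i"
| "leftmost (Mul t1 t2) = leftmost t1"

text \<open>Edges of G(t), oriented from parent to child; the root is leftmost t (= x_1).\<close>
fun tree_edges :: "bterm \<Rightarrow> (nat \<times> nat) set" where
  "tree_edges (Var i) = {}"
| "tree_edges (Mul t1 t2) =
     tree_edges t1 \<union> tree_edges t2 \<union> {(leftmost t1, leftmost t2)}"

definition depth :: "bterm \<Rightarrow> nat \<Rightarrow> nat" where
  "depth t x = (LEAST k. (leftmost t, x) \<in> tree_edges t ^^ k)"

definition M :: "nat \<Rightarrow> bterm \<Rightarrow> bterm \<Rightarrow> nat" where
  "M n t t' = Gcd ((\<lambda>x. nat \<bar>int (depth t x) - int (depth t' x)\<bar>) ` {1..n})"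

end

theory Submission
  imports Defs
begin


fun dep :: "bterm \<Rightarrow> nat \<Rightarrow> nat" where
  "dep (Var i) x = 0"
| "dep (Mul t1 t2) x = (if x \<in> set (leaves t1) then dep t1 x else Suc (dep t2 x))"

lemma leaves_ne: "leaves t \<noteq> []"
  by (induct t) auto

lemma lm_hd: "leftmost t = hd (leaves t)"
  by (induct t) (auto simp: leaves_ne)

lemma lm_in: "leftmost t \<in> set (leaves t)"
  by (induct t) auto

lemma edges_sub: "(p, c) \<in> tree_edges t \<Longrightarrow> p \<in> set (leaves t) \<and> c \<in> set (leaves t)"
  by (induct t) (auto simp: lm_in)

lemma dep_lm: "dep t (leftmost t) = 0"
  by (induct t) (auto simp: lm_in)

lemma dep_zero: "distinct (leaves t) \<Longrightarrow> x \<in> set (leaves t) \<Longrightarrow> dep t x = 0 \<Longrightarrow> x = leftmost t"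
  by (induct t) (auto split: if_splits)

lemma edge_dep: "distinct (leaves t) \<Longrightarrow> (p, c) \<in> tree_edges t \<Longrightarrow> dep t c = Suc (dep t p)"
proof (induct t)
  case (Var i) then show ?case by simp
next
  case (Mul t1 t2)
  have d: "set (leaves t1) \<inter> set (leaves t2) = {}" "distinct (leaves t1)" "distinct (leaves t2)"
    using Mul.prems(1) by auto
  from Mul.prems(2) consider "(p, c) \<in> tree_edges t1" | "(p, c) \<in> tree_edges t2"
    | "p = leftmost t1" "c = leftmost t2" by auto
  then show ?case
  proof cases
    case 1 then show ?thesis using Mul.hyps(1)[OF d(2) 1] edges_sub[OF 1] by simp
  next
    case 2
    have "p \<notin> set (leaves t1)" "c \<notin> set (leaves t1)" using edges_sub[OF 2] d(1) by blast+
    then show ?thesis using Mul.hyps(2)[OF d(3) 2] by simp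
  next
    case 3
    have "leftmost t2 \<notin> set (leaves t1)" using d(1) lm_in[of t2] by blast
    then have b: "dep (Mul t1 t2) (leftmost t2) = Suc 0" using dep_lm[of t2] by simp
    have a: "dep (Mul t1 t2) (leftmost t1) = 0" using lm_in[of t1] dep_lm[of t1] by simp
    show ?thesis unfolding 3 a b by simp
  qed
qed

lemma edge_lt: "sorted_wrt (<) (leaves t) \<Longrightarrow> (p, c) \<in> tree_edges t \<Longrightarrow> p < c"
proof (induct t)
  case (Var i) then show ?case by simp
next
  case (Mul t1 t2)
  then show ?case using lm_in[of t1] lm_in[of t2] by (auto simp: sorted_wrt_append)
qed

lemma reach: "x \<in> set (leaves t) \<Longrightarrow> (leftmost t, x) \<in> (tree_edges t)\<^sup>*"
proof (induct t)
  case (Var i) then show ?case by simp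
next
  case (Mul t1 t2)
  show ?case
  proof (cases "x \<in> set (leaves t1)")
    case True
    then have "(leftmost t1, x) \<in> (tree_edges t1)\<^sup>*" using Mul by auto
    then show ?thesis by (auto intro: rtrancl_mono[THEN subsetD])
  next
    case False
    then have "(leftmost t2, x) \<in> (tree_edges t2)\<^sup>*" using Mul by auto
    then have "(leftmost t2, x) \<in> (tree_edges (Mul t1 t2))\<^sup>*"
      by (auto intro: rtrancl_mono[THEN subsetD])
    moreover have "(leftmost t1, leftmost t2) \<in> tree_edges (Mul t1 t2)" by simp
    ultimately have "(leftmost t1, x) \<in> (tree_edges (Mul t1 t2))\<^sup>*"
      by (meson converse_rtrancl_into_rtrancl)
    then show ?thesis by simp
  qed
qed

lemma relpow_dep: "distinct (leaves t) \<Longrightarrow> (leftmost t, y) \<in> tree_edges t ^^ k \<Longrightarrow> dep t y = k"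
proof (induct k arbitrary: y)
  case 0 then have "y = leftmost t" by simp
  then show ?case by (simp add: dep_lm)
next
  case (Suc k)
  then obtain z where z: "(leftmost t, z) \<in> tree_edges t ^^ k" "(z, y) \<in> tree_edges t" by auto
  show ?case using Suc.hyps[OF Suc.prems(1) z(1)] edge_dep[OF Suc.prems(1) z(2)] by simp
qed

lemma depth_eq: "distinct (leaves t) \<Longrightarrow> x \<in> set (leaves t) \<Longrightarrow> depth t x = dep t x"
proof -
  assume d: "distinct (leaves t)" and x: "x \<in> set (leaves t)"
  from reach[OF x] obtain k where k: "(leftmost t, x) \<in> tree_edges t ^^ k"
    using rtrancl_power by blast
  have "dep t x = k" using relpow_dep[OF d k] .
  then show ?thesis unfolding depth_def
    using k relpow_dep[OF d] by (intro Least_equality) auto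
qed

lemma parent: "x \<in> set (leaves t) \<Longrightarrow> x \<noteq> leftmost t \<Longrightarrow> \<exists>p. (p, x) \<in> tree_edges t"
  using reach[of x t] by (auto elim: rtranclE)

lemma leaves_Var: "leaves t = [i] \<Longrightarrow> t = Var i"
  by (cases t) (auto simp: append_eq_Cons_conv leaves_ne)



lemma key_diff:
  assumes "leaves a1 @ us = leaves b1" "leaves a2 = us @ leaves b2" "us \<noteq> []"
       "distinct (leaves a1 @ leaves a2)"
  shows "\<exists>x \<in> set (leaves a1 @ leaves a2). dep (Mul a1 a2) x \<noteq> dep (Mul b1 b2) x"
proof -
  let ?y = "leftmost b2"
  have y2: "?y \<in> set (leaves a2)" using assms(2) lm_in[of b2] by simp
  have yb1: "?y \<notin> set (leaves b1)"
  proof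
    assume "?y \<in> set (leaves b1)"
    then have "?y \<in> set (leaves a1) \<or> ?y \<in> set us" using assms(1) by (metis Un_iff set_append)
    moreover have "?y \<notin> set (leaves a1)" using y2 assms(4) by auto
    moreover have "?y \<notin> set us" using assms(2,4) lm_in[of b2] by auto
    ultimately show False by blast
  qed
  have ya1: "?y \<notin> set (leaves a1)" using y2 assms(4) by auto
  have "hd (leaves a2) = hd us" using assms(2,3) by simp
  moreover have "hd us \<in> set us" using assms(3) by simp
  moreover have "?y \<notin> set us" using assms(2,4) lm_in[of b2] by auto
  ultimately have "?y \<noteq> leftmost a2" using lm_hd[of a2] by metis
  moreover have "distinct (leaves a2)" using assms(4) by simp
  ultimately have "dep a2 ?y \<noteq> 0" using dep_zero[of a2 ?y] y2 by blast
  then have "dep (Mul a1 a2) ?y \<noteq> dep (Mul b1 b2) ?y"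
    using ya1 yb1 dep_lm[of b2] by simp
  moreover have "?y \<in> set (leaves a1 @ leaves a2)" using y2 by simp
  ultimately show ?thesis by blast
qed

lemma dep_inj: "distinct (leaves t) \<Longrightarrow> leaves t' = leaves t \<Longrightarrow> t \<noteq> t'
   \<Longrightarrow> \<exists>x \<in> set (leaves t). dep t x \<noteq> dep t' x"
proof (induct t arbitrary: t')
  case (Var i)
  then have "leaves t' = [i]" by simp
  then have "t' = Var i" by (rule leaves_Var)
  with Var.prems(3) show ?case by simp
next
  case (Mul t1 t2)
  obtain t1' t2' where t': "t' = Mul t1' t2'"
  proof (cases t')
    case (Var j)
    then have "leaves t1 @ leaves t2 = [j]" using Mul.prems(2) by simp
    then have "length (leaves t1 @ leaves t2) = 1" by simp
    moreover have "length (leaves t1) \<noteq> 0" "length (leaves t2) \<noteq> 0"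
      using leaves_ne[of t1] leaves_ne[of t2] by simp_all
    ultimately have False by simp
    then show ?thesis ..
  next
    case (Mul a b) then show ?thesis using that by blast
  qed
  have L: "leaves t1 @ leaves t2 = leaves t1' @ leaves t2'" using Mul.prems(2) t' by simp
  have d: "distinct (leaves t1' @ leaves t2')" "distinct (leaves t1 @ leaves t2)"
    using Mul.prems(1) L by simp_all
  from L obtain us where
    "leaves t1 = leaves t1' @ us \<and> us @ leaves t2 = leaves t2' \<or> leaves t1 @ us = leaves t1' \<and> leaves t2 = us @ leaves t2'"
    using L[unfolded append_eq_append_conv2] by (elim exE)
  then consider "leaves t1 = leaves t1'" "leaves t2 = leaves t2'" | "us \<noteq> []" "leaves t1 = leaves t1' @ us" "us @ leaves t2 = leaves t2'"
    | "us \<noteq> []" "leaves t1 @ us = leaves t1'" "leaves t2 = us @ leaves t2'"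
    by (cases "us = []") auto
  then show ?case
  proof cases
    case 1
    then have e: "leaves t1 = leaves t1'" "leaves t2 = leaves t2'" by simp_all
    have d1: "distinct (leaves t1)" "distinct (leaves t2)" using d by simp_all
    show ?thesis
    proof (cases "t1 = t1'")
      case True
      then have "t2 \<noteq> t2'" using Mul.prems(3) t' by auto
      then obtain x where x: "x \<in> set (leaves t2)" "dep t2 x \<noteq> dep t2' x"
        using Mul.hyps(2)[OF d1(2) e(2)[symmetric]] by blast
      have "x \<notin> set (leaves t1)" using x(1) d(2) by auto
      then show ?thesis using t' e x by auto
    next
      case False
      then obtain x where x: "x \<in> set (leaves t1)" "dep t1 x \<noteq> dep t1' x"
        using Mul.hyps(1)[OF d1(1) e(1)[symmetric]] by blast
      then show ?thesis using t' e by auto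
    qed
  next
    case 2
    have "leaves t1' @ us = leaves t1" "leaves t2' = us @ leaves t2" using 2 by simp_all
    from key_diff[OF this 2(1) d(1)] obtain x where
      x: "x \<in> set (leaves t1' @ leaves t2')" "dep (Mul t1' t2') x \<noteq> dep (Mul t1 t2) x"
      by blast
    have x1: "x \<in> set (leaves (Mul t1 t2))" using x(1) L by (simp only: leaves.simps)
    have x2: "dep (Mul t1 t2) x \<noteq> dep t' x" using x(2) unfolding t' by (rule not_sym)
    show ?thesis using x1 x2 by blast
  next
    case 3
    from key_diff[of t1 us t1' t2 t2'] 3 d(2) show ?thesis using t' by simp
  qed
qed



lemma B_leaves: "t \<in> B n \<Longrightarrow> leaves t = [1..<Suc n]"
  by (simp add: B_def)

lemma B_set: "t \<in> B n \<Longrightarrow> set (leaves t) = {1..n}"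
  by (simp add: B_def atLeastLessThanSuc_atLeastAtMost del: upt_Suc)

lemma B_dist: "t \<in> B n \<Longrightarrow> distinct (leaves t)"
  by (simp add: B_def)

lemma B_sorted: "t \<in> B n \<Longrightarrow> sorted_wrt (<) (leaves t)"
  by (simp add: B_def del: upt_Suc)

lemma B_n: "t \<in> B n \<Longrightarrow> 1 \<le> n"
  using leaves_ne[of t] by (cases n) (auto simp: B_def)

lemma B_lm: "t \<in> B n \<Longrightarrow> leftmost t = 1"
proof -
  assume t: "t \<in> B n"
  then have "1 \<le> n" by (rule B_n)
  then have "[1..<Suc n] = 1 # [Suc 1..<Suc n]" by (intro upt_conv_Cons) simp
  then show ?thesis using lm_hd[of t] B_leaves[OF t] by simp
qed

lemma B_small: "t \<in> B n \<Longrightarrow> t' \<in> B n \<Longrightarrow> n < 2 \<Longrightarrow> t = t'"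
proof -
  assume t: "t \<in> B n" and t': "t' \<in> B n" and n: "n < 2"
  then have "n = 1" using B_n[OF t] by simp
  then have "leaves t = [1]" "leaves t' = [1]" using B_leaves[OF t] B_leaves[OF t'] by simp_all
  then show ?thesis using leaves_Var by metis
qed

definition hom :: "('a \<times> 'a) set \<Rightarrow> (nat \<Rightarrow> 'a) \<Rightarrow> bterm \<Rightarrow> bool" where
  "hom E f t \<longleftrightarrow> (\<forall>(p, c) \<in> tree_edges t. (f p, f c) \<in> E)"

definition ok :: "('a \<times> 'a) set \<Rightarrow> (nat \<Rightarrow> 'a option) \<Rightarrow> bterm \<Rightarrow> bool" where
  "ok E \<rho> t \<longleftrightarrow> (\<forall>i\<in>set (leaves t). \<rho> i \<noteq> None) \<and>
     (\<forall>(p, c) \<in> tree_edges t. (the (\<rho> p), the (\<rho> c)) \<in> E)"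

lemma eval_char: "eval E \<rho> t = (if ok E \<rho> t then \<rho> (leftmost t) else None)"
proof (induct t)
  case (Var i) then show ?case by (auto simp: ok_def)
next
  case (Mul t1 t2)
  have okM: "ok E \<rho> (Mul t1 t2) \<longleftrightarrow> ok E \<rho> t1 \<and> ok E \<rho> t2 \<and>
      (the (\<rho> (leftmost t1)), the (\<rho> (leftmost t2))) \<in> E"
    unfolding ok_def by auto
  show ?case
  proof (cases "ok E \<rho> t1 \<and> ok E \<rho> t2")
    case True
    then obtain a b where ab: "\<rho> (leftmost t1) = Some a" "\<rho> (leftmost t2) = Some b"
      using lm_in[of t1] lm_in[of t2] unfolding ok_def by blast
    show ?thesis using True ab Mul.hyps okM by simp
  next
    case False
    then have "eval E \<rho> t1 = None \<or> eval E \<rho> t2 = None" using Mul.hyps by auto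
    then have "eval E \<rho> (Mul t1 t2) = None"
      by (cases "eval E \<rho> t1"; cases "eval E \<rho> t2") auto
    then show ?thesis using False okM by auto
  qed
qed

lemma ok_hom: "(\<forall>i\<in>set (leaves t). \<rho> i = Some (f i)) \<Longrightarrow> ok E \<rho> t \<longleftrightarrow> hom E f t"
  unfolding ok_def hom_def using edges_sub[of _ _ t] by fastforce

lemma sat_iff:
  assumes t: "t \<in> B n" and t': "t' \<in> B n"
  shows "satisfies V E t t' \<longleftrightarrow> (\<forall>f. (\<forall>i\<in>{1..n}. f i \<in> V) \<longrightarrow> (hom E f t \<longleftrightarrow> hom E f t'))"
proof
  assume s: "satisfies V E t t'"
  show "\<forall>f. (\<forall>i\<in>{1..n}. f i \<in> V) \<longrightarrow> (hom E f t \<longleftrightarrow> hom E f t')"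
  proof (intro allI impI)
    fix f assume fV: "\<forall>i\<in>{1..n}. f i \<in> V"
    define \<rho> where "\<rho> i = (if i \<in> {1..n} then Some (f i) else None)" for i
    have car: "\<forall>i. \<rho> i \<in> ga_carrier V" using fV by (auto simp: \<rho>_def ga_carrier_def)
    have e: "eval E \<rho> t = eval E \<rho> t'" using s car unfolding satisfies_def by blast
    have r1: "\<forall>i\<in>set (leaves t). \<rho> i = Some (f i)" using B_set[OF t] by (simp add: \<rho>_def)
    have r2: "\<forall>i\<in>set (leaves t'). \<rho> i = Some (f i)" using B_set[OF t'] by (simp add: \<rho>_def)
    have "\<rho> 1 = Some (f 1)" using B_n[OF t] by (simp add: \<rho>_def)
    then show "hom E f t \<longleftrightarrow> hom E f t'"
      using e eval_char[of E \<rho> t] eval_char[of E \<rho> t'] ok_hom[OF r1] ok_hom[OF r2]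
        B_lm[OF t] B_lm[OF t'] by (auto split: if_splits)
  qed
next
  assume h: "\<forall>f. (\<forall>i\<in>{1..n}. f i \<in> V) \<longrightarrow> (hom E f t \<longleftrightarrow> hom E f t')"
  show "satisfies V E t t'" unfolding satisfies_def
  proof (intro allI impI)
    fix \<rho> :: "nat \<Rightarrow> 'a option" assume car: "\<forall>i. \<rho> i \<in> ga_carrier V"
    show "eval E \<rho> t = eval E \<rho> t'"
    proof (cases "\<forall>i\<in>{1..n}. \<rho> i \<noteq> None")
      case False
      then have "\<not> ok E \<rho> t" "\<not> ok E \<rho> t'" unfolding ok_def using B_set[OF t] B_set[OF t'] by auto
      then show ?thesis by (simp add: eval_char)
    next
      case True
      define f where "f i = the (\<rho> i)" for i
      have fV: "\<forall>i\<in>{1..n}. f i \<in> V"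
      proof
        fix i assume i: "i \<in> {1..n}"
        then obtain y where y: "\<rho> i = Some y" using True by blast
        then have "y \<in> V" using car[rule_format, of i] by (auto simp: ga_carrier_def)
        then show "f i \<in> V" using y by (simp add: f_def)
      qed
      have r: "\<forall>i\<in>{1..n}. \<rho> i = Some (f i)" using True by (auto simp: f_def)
      have "ok E \<rho> t \<longleftrightarrow> ok E \<rho> t'"
        using ok_hom[of t \<rho> f E] ok_hom[of t' \<rho> f E] r h fV B_set[OF t] B_set[OF t'] by simp
      then show ?thesis by (simp add: eval_char B_lm[OF t] B_lm[OF t'])
    qed
  qed
qed



definition walk :: "('a \<times> 'a) set \<Rightarrow> (nat \<Rightarrow> 'a) \<Rightarrow> bool" where
  "walk E W \<longleftrightarrow> (\<forall>i. (W i, W (Suc i)) \<in> E)"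

lemma comp_self: "v \<in> component E v"
  by (simp add: component_def)

lemma comp_closed: "x \<in> component E v \<Longrightarrow> (x, y) \<in> E \<Longrightarrow> y \<in> component E v"
  unfolding component_def by (simp add: rtrancl_into_rtrancl)

lemma comp_rt: "sym E \<Longrightarrow> x \<in> component E v \<Longrightarrow> y \<in> component E v \<Longrightarrow> (x, y) \<in> E\<^sup>*"
proof -
  assume s: "sym E" and x: "x \<in> component E v" and y: "y \<in> component E v"
  have "sym (E\<^sup>*)" using s by (rule sym_rtrancl)
  then have "(x, v) \<in> E\<^sup>*" using x unfolding component_def by (auto dest: symD)
  then show ?thesis using y unfolding component_def by simp
qed

lemma comp_sub: "E \<subseteq> V \<times> V \<Longrightarrow> v \<in> V \<Longrightarrow> component E v \<subseteq> V"
proof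
  fix y assume E: "E \<subseteq> V \<times> V" and v: "v \<in> V" and "y \<in> component E v"
  then have "(v, y) \<in> E\<^sup>*" by (simp add: component_def)
  then show "y \<in> V" using v E by (induct rule: rtrancl_induct) auto
qed

lemma walk_in_V: "E \<subseteq> V \<times> V \<Longrightarrow> walk E W \<Longrightarrow> W i \<in> V"
  unfolding walk_def by blast

lemma relpow_sym: "sym E \<Longrightarrow> (x, y) \<in> E ^^ n \<Longrightarrow> (y, x) \<in> E ^^ n"
proof (induct n arbitrary: x y)
  case 0 then show ?case by simp
next
  case (Suc n)
  from Suc.prems(2) obtain z where z: "(x, z) \<in> E ^^ n" "(z, y) \<in> E" by (rule relpow_Suc_E)
  have "(y, z) \<in> E" using z(2) Suc.prems(1) by (rule symD[rotated])
  moreover have "(z, x) \<in> E ^^ n" using Suc.hyps[OF Suc.prems(1) z(1)] .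
  ultimately show ?case by (rule relpow_Suc_I2)
qed

locale badcomp =
  fixes V :: "'a set" and E :: "('a \<times> 'a) set" and v :: 'a
  assumes EV: "E \<subseteq> V \<times> V" and sE: "sym E" and vV: "v \<in> V"
    and ntriv: "\<not> trivial_comp E (component E v)"
    and nloops: "\<not> complete_loops_comp E (component E v)"
    and nbip: "\<not> complete_bipartite_comp E (component E v)"
begin

abbreviation "K \<equiv> component E v"

lemma symE: "(x, y) \<in> E \<Longrightarrow> (y, x) \<in> E"
  using sE by (rule symD)

lemma nbr: "u \<in> K \<Longrightarrow> \<exists>w. (u, w) \<in> E"
proof (rule ccontr)
  assume u: "u \<in> K" and nn: "\<not> (\<exists>w. (u, w) \<in> E)"
  show False
  proof (cases "u = v")
    case False
    have "(v, u) \<in> E\<^sup>*" using u by (simp add: component_def)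
    then obtain y where "(y, u) \<in> E" using False by (auto elim: rtranclE)
    then show False using nn symE by blast
  next
    case True
    have "K = {v}"
    proof
      show "K \<subseteq> {v}"
      proof
        fix w assume "w \<in> K"
        then have "(v, w) \<in> E\<^sup>*" by (simp add: component_def)
        then show "w \<in> {v}" using nn True by (auto elim: converse_rtranclE)
      qed
    qed (simp add: comp_self)
    moreover have "(v, v) \<notin> E" using nn True by blast
    ultimately show False using ntriv unfolding trivial_comp_def by blast
  qed
qed

lemma P2: "\<exists>x z y. x \<in> K \<and> (x, z) \<in> E \<and> (z, y) \<in> E \<and> (x, y) \<notin> E" (is ?G)
proof -
  obtain x y where xy: "x \<in> K" "y \<in> K" "(x, y) \<notin> E"
    using nloops unfolding complete_loops_comp_def by auto
  have "(x, y) \<in> E\<^sup>*" using comp_rt[OF sE xy(1,2)] .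
  then have "x \<in> K \<longrightarrow> (x, y) \<notin> E \<longrightarrow> ?G"
  proof (induct rule: converse_rtrancl_induct)
    case base
    show ?case
    proof (intro impI)
      assume yy: "y \<in> K" "(y, y) \<notin> E"
      obtain z where "(y, z) \<in> E" using nbr[OF yy(1)] by blast
      then show ?G using yy symE by blast
    qed
  next
    case (step a b)
    show ?case
    proof (intro impI)
      assume a: "a \<in> K" "(a, y) \<notin> E"
      have b: "b \<in> K" using comp_closed[OF a(1) step(1)] .
      show ?G
      proof (cases "(b, y) \<in> E")
        case True then show ?G using a step(1) by blast
      next
        case False then show ?G using step(3) b by blast
      qed
    qed
  qed
  then show ?G using xy by blast
qed

lemma P3: "\<exists>x0 x1 x2 x3. x0 \<in> K \<and> (x0, x1) \<in> E \<and> (x1, x2) \<in> E \<and> (x2, x3) \<in> E \<and> (x0, x3) \<notin> E"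
proof (rule ccontr)
  assume "\<not> ?thesis"
  then have Q: "\<And>x0 x1 x2 x3. x0 \<in> K \<Longrightarrow> (x0, x1) \<in> E \<Longrightarrow> (x1, x2) \<in> E \<Longrightarrow> (x2, x3) \<in> E
     \<Longrightarrow> (x0, x3) \<in> E" by blast
  show False
  proof (cases "\<exists>u\<in>K. (u, u) \<in> E")
    case True
    then obtain u where u: "u \<in> K" "(u, u) \<in> E" by blast
    have all: "(u, y) \<in> E \<and> (y, y) \<in> E" if "y \<in> K" for y
    proof -
      have "(u, y) \<in> E\<^sup>*" using comp_rt[OF sE u(1) that] .
      then show ?thesis
      proof (induct rule: rtrancl_induct)
        case base then show ?case using u by simp
      next
        case (step z y)
        have zK: "z \<in> K" using comp_closed[OF u(1)] step(1) 
          by (metis comp_rt[OF sE] component_def mem_Collect_eq rtrancl_trans u(1))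
        have yK: "y \<in> K" using comp_closed[OF zK step(2)] .
        have "(u, y) \<in> E" using Q[OF u(1)] step by blast
        moreover have "(y, y) \<in> E" using Q[OF yK symE[OF step(2)]] step by blast
        ultimately show ?case by blast
      qed
    qed
    have "E \<inter> (K \<times> K) = K \<times> K"
    proof
      show "K \<times> K \<subseteq> E \<inter> (K \<times> K)"
      proof
        fix p assume "p \<in> K \<times> K"
        then obtain x y where p: "p = (x, y)" "x \<in> K" "y \<in> K" by blast
        have "(x, y) \<in> E" using Q[OF p(2) symE[OF conjunct1[OF all[OF p(2)]]] u(2) conjunct1[OF all[OF p(3)]]] .
        then show "p \<in> E \<inter> (K \<times> K)" using p by blast
      qed
    qed blast
    then show False using nloops unfolding complete_loops_comp_def by blast
  next
    case False
    then have noloop: "\<And>y. y \<in> K \<Longrightarrow> (y, y) \<notin> E" by blast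
    have odd: "(x, y) \<in> E" if "x \<in> K" "(x, y) \<in> E ^^ (2 * k + 1)" for x y k
      using that(2)
    proof (induct k arbitrary: y)
      case 0 then show ?case by simp
    next
      case (Suc k)
      have "(x, y) \<in> E ^^ Suc (Suc (2 * k + 1))" using Suc.prems by simp
      then obtain z1 where z1: "(x, z1) \<in> E ^^ Suc (2 * k + 1)" "(z1, y) \<in> E" by (rule relpow_Suc_E)
      from z1(1) obtain z2 where z2: "(x, z2) \<in> E ^^ (2 * k + 1)" "(z2, z1) \<in> E" by (rule relpow_Suc_E)
      have "(x, z2) \<in> E" using Suc.hyps[OF z2(1)] .
      then show ?case using Q[OF that(1)] z1(2) z2(2) by blast
    qed
    have inK: "y \<in> K" if "(v, y) \<in> E ^^ n" for y n
      using that relpow_imp_rtrancl by (fastforce simp: component_def)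
    define A where "A = {y. \<exists>k. (v, y) \<in> E ^^ (2 * k)}"
    define B where "B = {y. \<exists>k. (v, y) \<in> E ^^ (2 * k + 1)}"
    have AK: "A \<subseteq> K" "B \<subseteq> K" using inK unfolding A_def B_def by blast+
    have "v \<in> A" unfolding A_def by (rule CollectI, rule exI[of _ 0]) simp
    then have Ane: "A \<noteq> {}" by blast
    obtain w where "(v, w) \<in> E" using nbr[OF comp_self] by blast
    then have "w \<in> B" unfolding B_def by (intro CollectI exI[of _ 0]) simp
    then have Bne: "B \<noteq> {}" by blast
    have cross: "(x, y) \<in> E" if c: "(x, v) \<in> E ^^ a" "(v, y) \<in> E ^^ b" "odd (a + b)" "x \<in> K" for x y a b
    proof -
      have "(x, y) \<in> E ^^ (a + b)" using c(1,2) relpow_add[of a b E] by blast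
      moreover obtain k where "a + b = 2 * k + 1" using c(3) oddE by blast
      ultimately show ?thesis using odd[OF c(4)] by metis
    qed
    have disj: "A \<inter> B = {}"
    proof (rule ccontr)
      assume "A \<inter> B \<noteq> {}"
      then obtain y k l where y: "(v, y) \<in> E ^^ (2 * k)" "(v, y) \<in> E ^^ (2 * l + 1)"
        unfolding A_def B_def by blast
      have "(y, v) \<in> E ^^ (2 * k)" using relpow_sym[OF sE y(1)] .
      then have "(y, y) \<in> E" using cross[OF _ y(2)] inK[OF y(1)] by simp
      then show False using noloop inK[OF y(1)] by blast
    qed
    have cov: "K = A \<union> B"
    proof
      show "K \<subseteq> A \<union> B"
      proof
        fix y assume "y \<in> K"
        then have "(v, y) \<in> E\<^sup>*" by (simp add: component_def)
        then obtain n where n: "(v, y) \<in> E ^^ n" using rtrancl_power by blast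
        show "y \<in> A \<union> B"
        proof (cases "even n")
          case True
          then obtain k where "n = 2 * k" by blast
          then show ?thesis using n unfolding A_def by blast
        next
          case False
          then obtain k where "n = 2 * k + 1" using oddE by blast
          then show ?thesis using n unfolding B_def by blast
        qed
      qed
    qed (use AK in blast)
    have edges: "E \<inter> (K \<times> K) = (A \<times> B) \<union> (B \<times> A)"
    proof
      show "E \<inter> (K \<times> K) \<subseteq> (A \<times> B) \<union> (B \<times> A)"
      proof
        fix p assume p: "p \<in> E \<inter> (K \<times> K)"
        then obtain x y where xy: "p = (x, y)" "(x, y) \<in> E" "x \<in> K" by blast
        have "x \<in> A \<union> B" using xy(3) cov by blast
        then show "p \<in> (A \<times> B) \<union> (B \<times> A)"
        proof
          assume "x \<in> A"
          then obtain k where "(v, x) \<in> E ^^ (2 * k)" unfolding A_def by blast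
          then have "(v, y) \<in> E ^^ (2 * k + 1)" using relpow_Suc_I xy(2) by fastforce
          then have "y \<in> B" unfolding B_def by blast
          then show ?thesis using \<open>x \<in> A\<close> xy(1) by blast
        next
          assume "x \<in> B"
          then obtain k where "(v, x) \<in> E ^^ (2 * k + 1)" unfolding B_def by blast
          then have "(v, y) \<in> E ^^ Suc (2 * k + 1)" using relpow_Suc_I xy(2) by fastforce
          then have "(v, y) \<in> E ^^ (2 * (Suc k))" by simp
          then have "y \<in> A" unfolding A_def by blast
          then show ?thesis using \<open>x \<in> B\<close> xy(1) by blast
        qed
      qed
    next
      show "(A \<times> B) \<union> (B \<times> A) \<subseteq> E \<inter> (K \<times> K)"
      proof
        fix p assume p: "p \<in> (A \<times> B) \<union> (B \<times> A)"
        then obtain x y where xy: "p = (x, y)" "x \<in> K" "y \<in> K" using AK by blast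
        from p have "(x, y) \<in> E"
        proof
          assume "p \<in> A \<times> B"
          then obtain k l where kl: "(v, x) \<in> E ^^ (2 * k)" "(v, y) \<in> E ^^ (2 * l + 1)"
            using xy(1) unfolding A_def B_def by blast
          have "odd (2 * k + (2 * l + 1))" by simp
          then show ?thesis using cross[OF relpow_sym[OF sE kl(1)] kl(2) _ xy(2)] by blast
        next
          assume "p \<in> B \<times> A"
          then obtain k l where kl: "(v, x) \<in> E ^^ (2 * k + 1)" "(v, y) \<in> E ^^ (2 * l)"
            using xy(1) unfolding A_def B_def by blast
          have "odd ((2 * k + 1) + 2 * l)" by simp
          then show ?thesis using cross[OF relpow_sym[OF sE kl(1)] kl(2) _ xy(2)] by blast
        qed
        then show "p \<in> E \<inter> (K \<times> K)" using xy by blast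
      qed
    qed
    have "complete_bipartite_comp E K"
      unfolding complete_bipartite_comp_def using Ane Bne disj cov edges by blast
    then show False using nbip by blast
  qed
qed

definition Pw :: "nat \<Rightarrow> bool" where
  "Pw m \<longleftrightarrow> (\<exists>W :: nat \<Rightarrow> 'a. walk E W \<and> W 0 \<in> K \<and> (W 0, W m) \<notin> E)"

lemma Pw2: "Pw 2"
proof -
  obtain x z y where h: "x \<in> K" "(x, z) \<in> E" "(z, y) \<in> E" "(x, y) \<notin> E" using P2 by blast
  define W where "W i = (if i = 0 then x else if odd i then z else y)" for i :: nat
  have "walk E W" unfolding walk_def W_def using h symE by auto
  moreover have "W 0 = x" "W 2 = y" by (simp_all add: W_def)
  ultimately show ?thesis unfolding Pw_def using h by metis
qed

lemma Pw3: "Pw 3"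
proof -
  obtain x0 x1 x2 x3 where h: "x0 \<in> K" "(x0, x1) \<in> E" "(x1, x2) \<in> E" "(x2, x3) \<in> E" "(x0, x3) \<notin> E"
    using P3 by blast
  define W where "W i = (if i = 0 then x0 else if i = 1 then x1 else if i = 2 then x2
     else if odd i then x3 else x2)" for i :: nat
  have "walk E W" unfolding walk_def W_def using h symE by auto
  moreover have "W 0 = x0" "W 3 = x3" by (simp_all add: W_def)
  ultimately show ?thesis unfolding Pw_def using h by metis
qed

lemma Pw_pad: "Pw m \<Longrightarrow> Pw (m + 2)"
proof -
  assume "Pw m"
  then obtain W where W: "walk E W" "W 0 \<in> K" "(W 0, W m) \<notin> E" unfolding Pw_def by blast
  define W' where "W' i = (if i < 2 then W i else W (i - 2))" for i :: nat
  have "walk E W'" unfolding walk_def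
  proof
    fix i show "(W' i, W' (Suc i)) \<in> E"
    proof (cases "i < 2")
      case True
      then have "i = 0 \<or> i = 1" by auto
      then show ?thesis using W(1) symE unfolding walk_def W'_def by auto
    next
      case False
      then have "Suc i - 2 = Suc (i - 2)" by simp
      then show ?thesis using W(1) False unfolding walk_def W'_def by simp
    qed
  qed
  moreover have "W' 0 = W 0" "W' (m + 2) = W m" by (simp_all add: W'_def)
  ultimately show ?thesis unfolding Pw_def using W by metis
qed

lemma Pw_all: "2 \<le> m \<Longrightarrow> Pw m"
proof -
  have "Pw (2 + k) \<and> Pw (3 + k)" for k
  proof (induct k)
    case 0 then show ?case using Pw2 Pw3 by simp
  next
    case (Suc k)
    then have a: "Pw (2 + k + 2)" "Pw (3 + k)" using Pw_pad by blast+
    have e: "2 + Suc k = 3 + k" "3 + Suc k = 2 + k + 2" by simp_all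
    show ?case unfolding e using a by blast
  qed
  moreover assume "2 \<le> m"
  then have "m = 2 + (m - 2)" by simp
  ultimately show ?thesis by metis
qed

lemma walk_offset: "walk E W \<Longrightarrow> \<exists>W'. walk E W' \<and> W' a = W 0 \<and> W' (a + m) = W m"
proof -
  assume W: "walk E W"
  define W' where "W' i = (if a \<le> i then W (i - a) else if even (a - i) then W 0 else W 1)" for i :: nat
  have "walk E W'" unfolding walk_def
  proof
    fix i show "(W' i, W' (Suc i)) \<in> E"
    proof (cases "a \<le> i")
      case True
      then have "Suc i - a = Suc (i - a)" by simp
      then show ?thesis using W True unfolding walk_def W'_def by simp
    next
      case False
      have w01: "(W 0, W 1) \<in> E" "(W 1, W 0) \<in> E" using W symE unfolding walk_def by auto
      show ?thesis
      proof (cases "Suc i = a")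
        case True
        then have "a - i = 1" by simp
        then show ?thesis using w01 True unfolding W'_def by simp
      next
        case False
        with \<open>\<not> a \<le> i\<close> have "Suc i < a" by simp
        then have "a - i = Suc (a - Suc i)" by simp
        then show ?thesis using w01 \<open>Suc i < a\<close> \<open>\<not> a \<le> i\<close> unfolding W'_def by auto
      qed
    qed
  qed
  moreover have "W' a = W 0" "W' (a + m) = W m" by (simp_all add: W'_def)
  ultimately show ?thesis by blast
qed

lemma bad_walk: "2 \<le> m \<Longrightarrow> \<exists>W :: nat \<Rightarrow> 'a. walk E W \<and> (W a, W (a + m)) \<notin> E"
proof -
  assume "2 \<le> m"
  then obtain W where "walk E W" "(W 0, W m) \<notin> E" using Pw_all unfolding Pw_def by blast
  then show ?thesis using walk_offset by metis
qed

end



lemma hom_reach: "hom E f t \<Longrightarrow> (p, c) \<in> (tree_edges t)\<^sup>* \<Longrightarrow> (f p, f c) \<in> E\<^sup>*"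
proof -
  assume h: "hom E f t" and pc: "(p, c) \<in> (tree_edges t)\<^sup>*"
  from pc show ?thesis
  proof (induct rule: rtrancl_induct)
    case base then show ?case by simp
  next
    case (step y z)
    then have "(f y, f z) \<in> E" using h unfolding hom_def by blast
    from step(3) this show ?case by (rule rtrancl_into_rtrancl)
  qed
qed

lemma in_comp: "t \<in> B n \<Longrightarrow> hom E f t \<Longrightarrow> x \<in> {1..n} \<Longrightarrow> f x \<in> component E (f 1)"
proof -
  assume t: "t \<in> B n" and h: "hom E f t" and x: "x \<in> {1..n}"
  have "(leftmost t, x) \<in> (tree_edges t)\<^sup>*" using reach[of x t] x B_set[OF t] by simp
  then have "(f 1, f x) \<in> E\<^sup>*" using hom_reach[OF h] B_lm[OF t] by simp
  then show ?thesis by (simp add: component_def)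
qed

lemma edge_in: "t \<in> B n \<Longrightarrow> (p, c) \<in> tree_edges t \<Longrightarrow> p \<in> {1..n} \<and> c \<in> {1..n}"
  using edges_sub[of p c t] B_set[of t n] by simp

lemma parent2: "t \<in> B n \<Longrightarrow> 2 \<le> n \<Longrightarrow> \<exists>p. (p, 2) \<in> tree_edges t"
  using parent[of 2 t] B_set[of t n] B_lm[of t n] by simp

lemma nontriv: "t \<in> B n \<Longrightarrow> 2 \<le> n \<Longrightarrow> hom E f t \<Longrightarrow> \<not> trivial_comp E (component E (f 1))"
proof
  assume t: "t \<in> B n" and n: "2 \<le> n" and h: "hom E f t" and tr: "trivial_comp E (component E (f 1))"
  obtain p where p: "(p, 2) \<in> tree_edges t" using parent2[OF t n] by blast
  have pin: "p \<in> {1..n}" "2 \<in> {1..n}" using edge_in[OF t p] by auto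
  have e: "(f p, f 2) \<in> E" using h p unfolding hom_def by blast
  obtain w where w: "component E (f 1) = {w}" "(w, w) \<notin> E" using tr unfolding trivial_comp_def by blast
  have "f p = w" "f 2 = w" using in_comp[OF t h pin(1)] in_comp[OF t h pin(2)] w(1) by auto
  then show False using e w(2) by simp
qed

lemma comp_in: "v \<in> V \<Longrightarrow> component E v \<in> components V E"
  by (simp add: components_def)

lemma f1V: "t \<in> B n \<Longrightarrow> \<forall>i\<in>{1..n}. f i \<in> V \<Longrightarrow> f 1 \<in> V"
  using B_n[of t n] by simp

lemma hom_all: "t \<in> B n \<Longrightarrow> \<forall>i\<in>{1..n}. \<forall>j\<in>{1..n}. (f i, f j) \<in> E \<Longrightarrow> hom E f t"
  unfolding hom_def using edge_in[of t n] by blast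

lemma part1_hom:
  assumes all: "\<forall>K \<in> components V E. trivial_comp E K \<or> complete_loops_comp E K"
    and t: "t \<in> B n" and n: "2 \<le> n" and fV: "\<forall>i\<in>{1..n}. f i \<in> V"
  shows "hom E f t \<longleftrightarrow> (\<forall>i\<in>{1..n}. \<forall>j\<in>{1..n}. (f i, f j) \<in> E)"
proof
  assume h: "hom E f t"
  let ?K = "component E (f 1)"
  have Kc: "?K \<in> components V E" by (rule comp_in[OF f1V[OF t fV]])
  have "trivial_comp E ?K \<or> complete_loops_comp E ?K" by (rule bspec[OF all Kc])
  then have "complete_loops_comp E ?K" using nontriv[OF t n h] by (elim disjE) simp_all
  then have KK: "?K \<times> ?K \<subseteq> E" unfolding complete_loops_comp_def by (metis inf.cobounded1)
  show "\<forall>i\<in>{1..n}. \<forall>j\<in>{1..n}. (f i, f j) \<in> E"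
    using in_comp[OF t h] KK by blast
qed (rule hom_all[OF t])

lemma part1:
  assumes all: "\<forall>K \<in> components V E. trivial_comp E K \<or> complete_loops_comp E K"
    and t: "t \<in> B n" and t': "t' \<in> B n"
  shows "satisfies V E t t'"
proof (cases "n < 2")
  case True then show ?thesis using B_small[OF t t'] by (simp add: satisfies_def)
next
  case False
  then have n: "2 \<le> n" by simp
  show ?thesis unfolding sat_iff[OF t t']
    using part1_hom[OF all t n] part1_hom[OF all t' n] by blast
qed

definition PC :: "nat \<Rightarrow> bterm \<Rightarrow> bterm \<Rightarrow> bool" where
  "PC n t t' \<longleftrightarrow> (\<forall>x\<in>{1..n}. (even (dep t x) \<longleftrightarrow> even (dep t' x)))"

lemma side:
  assumes t: "t \<in> B n" and h: "hom E f t" and fK: "\<forall>x\<in>{1..n}. f x \<in> A \<union> B'"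
    and dis: "A \<inter> B' = {}" and ed: "\<And>a b. a \<in> A \<union> B' \<Longrightarrow> b \<in> A \<union> B' \<Longrightarrow> (a, b) \<in> E \<Longrightarrow>
       (a \<in> A \<longleftrightarrow> b \<notin> A)"
    and x: "x \<in> {1..n}"
  shows "f x \<in> A \<longleftrightarrow> (f 1 \<in> A \<longleftrightarrow> even (dep t x))"
proof -
  have "(1, x) \<in> (tree_edges t)\<^sup>*" using reach[of x t] x B_set[OF t] B_lm[OF t] by simp
  then show ?thesis
  proof (induct rule: rtrancl_induct)
    case base
    then show ?case using dep_lm[of t] B_lm[OF t] by simp
  next
    case (step y z)
    have yz: "y \<in> {1..n}" "z \<in> {1..n}" using edge_in[OF t step(2)] by auto
    have d: "dep t z = Suc (dep t y)" using edge_dep[OF B_dist[OF t] step(2)] .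
    have "(f y, f z) \<in> E" using h step(2) unfolding hom_def by blast
    then have "f y \<in> A \<longleftrightarrow> f z \<notin> A" using ed fK yz by blast
    then show ?case using step(3) d by auto
  qed
qed

lemma bip_props:
  assumes "complete_bipartite_comp E K"
  obtains A B' where "A \<noteq> {}" "B' \<noteq> {}" "A \<inter> B' = {}" "K = A \<union> B'"
    "E \<inter> (K \<times> K) = (A \<times> B') \<union> (B' \<times> A)"
  using assms unfolding complete_bipartite_comp_def by blast

lemma transfer_lem:
  assumes all: "\<forall>K \<in> components V E. trivial_comp E K \<or> complete_loops_comp E K \<or> complete_bipartite_comp E K"
    and t: "t \<in> B n" and t': "t' \<in> B n" and n: "2 \<le> n" and pc: "PC n t t'"
    and fV: "\<forall>i\<in>{1..n}. f i \<in> V" and h: "hom E f t"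
  shows "hom E f t'"
proof -
  let ?K = "component E (f 1)"
  have Kc: "?K \<in> components V E" by (rule comp_in[OF f1V[OF t fV]])
  have "trivial_comp E ?K \<or> complete_loops_comp E ?K \<or> complete_bipartite_comp E ?K"
    by (rule bspec[OF all Kc])
  then have c: "complete_loops_comp E ?K \<or> complete_bipartite_comp E ?K"
    using nontriv[OF t n h] by (elim disjE) simp_all
  have fK: "\<forall>x\<in>{1..n}. f x \<in> ?K" using in_comp[OF t h] by blast
  from c show ?thesis
  proof
    assume "complete_loops_comp E ?K"
    then have KK: "?K \<times> ?K \<subseteq> E" unfolding complete_loops_comp_def by (metis inf.cobounded1)
    have "\<forall>i\<in>{1..n}. \<forall>j\<in>{1..n}. (f i, f j) \<in> E" using fK KK by blast
    then show ?thesis by (rule hom_all[OF t'])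
  next
    assume "complete_bipartite_comp E ?K"
    then obtain A B' where AB: "A \<inter> B' = {}" "?K = A \<union> B'"
      "E \<inter> (?K \<times> ?K) = (A \<times> B') \<union> (B' \<times> A)" by (rule bip_props)
    have ed: "(a \<in> A \<longleftrightarrow> b \<notin> A)" if "a \<in> A \<union> B'" "b \<in> A \<union> B'" "(a, b) \<in> E" for a b
    proof -
      have "(a, b) \<in> E \<inter> (?K \<times> ?K)" using that unfolding AB(2) by simp
      then have "(a, b) \<in> (A \<times> B') \<union> (B' \<times> A)" unfolding AB(3) .
      then show ?thesis using AB(1) by blast
    qed
    have fK': "\<forall>x\<in>{1..n}. f x \<in> A \<union> B'" using fK AB(2) by simp
    have sd: "f x \<in> A \<longleftrightarrow> (f 1 \<in> A \<longleftrightarrow> even (dep t x))" if "x \<in> {1..n}" for x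
      using side[OF t h fK' AB(1) ed that] by blast
    show ?thesis unfolding hom_def
    proof (intro ballI, clarify)
      fix p c assume pc': "(p, c) \<in> tree_edges t'"
      have pcn: "p \<in> {1..n}" "c \<in> {1..n}" using edge_in[OF t' pc'] by auto
      have d: "dep t' c = Suc (dep t' p)" using edge_dep[OF B_dist[OF t'] pc'] .
      have "even (dep t c) \<longleftrightarrow> \<not> even (dep t p)" using pc pcn d unfolding PC_def by auto
      then have "f c \<in> A \<longleftrightarrow> f p \<notin> A" using sd[OF pcn(1)] sd[OF pcn(2)] by blast
      moreover have "f p \<in> A \<union> B'" "f c \<in> A \<union> B'" using fK' pcn by auto
      ultimately have "(f p, f c) \<in> (A \<times> B') \<union> (B' \<times> A)" using AB(1) by blast
      then have "(f p, f c) \<in> E \<inter> (?K \<times> ?K)" unfolding AB(3) .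
      then show "(f p, f c) \<in> E" by simp
    qed
  qed
qed

lemma sat_PC:
  assumes EV: "E \<subseteq> V \<times> V" and sE: "sym E"
    and bip: "K0 \<in> components V E" "complete_bipartite_comp E K0"
    and t: "t \<in> B n" and t': "t' \<in> B n" and s: "satisfies V E t t'"
  shows "PC n t t'"
proof -
  obtain v0 where v0: "v0 \<in> V" "K0 = component E v0" using bip(1) unfolding components_def by blast
  obtain A B' where AB: "A \<noteq> {}" "B' \<noteq> {}" "A \<inter> B' = {}" "K0 = A \<union> B'"
      "E \<inter> (K0 \<times> K0) = (A \<times> B') \<union> (B' \<times> A)" using bip(2) by (rule bip_props)
  obtain a b where ab: "a \<in> A" "b \<in> B'" using AB(1,2) by blast
  have "(a, b) \<in> E \<inter> (K0 \<times> K0)" "(b, a) \<in> E \<inter> (K0 \<times> K0)" unfolding AB(5) using ab by simp_all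
  then have abE: "(a, b) \<in> E" "(b, a) \<in> E" by simp_all
  have KV: "K0 \<subseteq> V" using comp_sub[OF EV v0(1)] v0(2) by simp
  define f where "f i = (if even (dep t i) then a else b)" for i
  have fV: "\<forall>i\<in>{1..n}. f i \<in> V" using ab AB(4) KV by (auto simp: f_def)
  have ht: "hom E f t" unfolding hom_def
  proof (intro ballI, clarify)
    fix p c assume pc: "(p, c) \<in> tree_edges t"
    have d: "dep t c = Suc (dep t p)" using edge_dep[OF B_dist[OF t] pc] .
    show "(f p, f c) \<in> E" using abE d by (auto simp: f_def)
  qed
  have ht': "hom E f t'" using s ht fV unfolding sat_iff[OF t t'] by blast
  have ed: "(x \<in> A \<longleftrightarrow> y \<notin> A)" if "x \<in> A \<union> B'" "y \<in> A \<union> B'" "(x, y) \<in> E" for x y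
  proof -
    have "(x, y) \<in> E \<inter> (K0 \<times> K0)" using that unfolding AB(4) by simp
    then have "(x, y) \<in> (A \<times> B') \<union> (B' \<times> A)" unfolding AB(5) .
    then show ?thesis using AB(3) by blast
  qed
  have fK: "\<forall>x\<in>{1..n}. f x \<in> A \<union> B'" using ab by (auto simp: f_def)
  have f1: "f 1 = a" using dep_lm[of t] B_lm[OF t] by (simp add: f_def)
  have bA: "b \<notin> A" using ab AB(3) by blast
  show ?thesis unfolding PC_def
  proof
    fix x assume x: "x \<in> {1..n}"
    have "f x \<in> A \<longleftrightarrow> even (dep t' x)" using side[OF t' ht' fK AB(3) ed x] f1 ab(1) by simp
    moreover have "f x \<in> A \<longleftrightarrow> even (dep t x)" using ab(1) bA by (simp add: f_def)
    ultimately show "even (dep t x) \<longleftrightarrow> even (dep t' x)" by blast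
  qed
qed

lemma even_absdiff: "even (nat \<bar>int a - int b\<bar>) \<longleftrightarrow> (even a \<longleftrightarrow> even b)"
proof (cases "a \<le> b")
  case True
  then have "nat \<bar>int a - int b\<bar> = b - a" by simp
  then show ?thesis using True by auto
next
  case False
  then have "nat \<bar>int a - int b\<bar> = a - b" by simp
  then show ?thesis using False by auto
qed

lemma M_PC: "t \<in> B n \<Longrightarrow> t' \<in> B n \<Longrightarrow> even (M n t t') \<longleftrightarrow> PC n t t'"
proof -
  assume t: "t \<in> B n" and t': "t' \<in> B n"
  have "even (M n t t') \<longleftrightarrow> (\<forall>x\<in>{1..n}. even (nat \<bar>int (depth t x) - int (depth t' x)\<bar>))"
    unfolding M_def dvd_Gcd_iff by simp
  also have "\<dots> \<longleftrightarrow> (\<forall>x\<in>{1..n}. (even (dep t x) \<longleftrightarrow> even (dep t' x)))"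
    using depth_eq[OF B_dist[OF t]] depth_eq[OF B_dist[OF t']] B_set[OF t] B_set[OF t']
    by (simp add: even_absdiff)
  finally show ?thesis unfolding PC_def .
qed

lemma break:
  assumes EV: "E \<subseteq> V \<times> V" and sE: "sym E"
    and walks: "\<And>m a. 2 \<le> m \<Longrightarrow> \<exists>W :: nat \<Rightarrow> 'a. walk E W \<and> (W a, W (a + m)) \<notin> E"
    and t: "t \<in> B n" and t': "t' \<in> B n" and x: "x \<in> {1..n}" and lt: "dep t x < dep t' x"
    and eq: "\<forall>y\<in>{1..n}. y < x \<longrightarrow> dep t y = dep t' y"
  shows "\<exists>f :: nat \<Rightarrow> 'a. (\<forall>i\<in>{1..n}. f i \<in> V) \<and> hom E f t \<and> \<not> hom E f t'"
proof -
  have "x \<noteq> leftmost t'" using lt dep_lm[of t'] by auto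
  then obtain p where p: "(p, x) \<in> tree_edges t'" using parent[of x t'] x B_set[OF t'] by auto
  have px: "p < x" using edge_lt[OF B_sorted[OF t'] p] .
  have pn: "p \<in> {1..n}" using edge_in[OF t' p] by auto
  have dp: "dep t' x = Suc (dep t' p)" using edge_dep[OF B_dist[OF t'] p] .
  have dpt: "dep t p = dep t' p" using eq pn px by blast
  define D where "D = dep t x"
  define m where "m = dep t' x + 1 - D"
  have m2: "2 \<le> m" using lt unfolding m_def D_def by simp
  obtain W :: "nat \<Rightarrow> 'a" where W: "walk E W" "(W D, W (D + m)) \<notin> E" using walks[OF m2] by blast
  have Dm: "D + m = dep t p + 2" using lt dp dpt unfolding m_def D_def by simp
  define f where "f y = (if y < x then W (dep t y + 2) else W (dep t y))" for y
  have fV: "\<forall>i\<in>{1..n}. f i \<in> V" unfolding f_def using walk_in_V[OF EV W(1)] by simp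
  have ht: "hom E f t" unfolding hom_def
  proof (intro ballI, clarify)
    fix q y assume qy: "(q, y) \<in> tree_edges t"
    have lt2: "q < y" using edge_lt[OF B_sorted[OF t] qy] .
    have d: "dep t y = Suc (dep t q)" using edge_dep[OF B_dist[OF t] qy] .
    have w: "(W i, W (Suc i)) \<in> E" "(W (Suc i), W i) \<in> E" for i
      using W(1) sE unfolding walk_def by (auto dest: symD)
    show "(f q, f y) \<in> E"
    proof (cases "y < x")
      case True
      then have "q < x" using lt2 by simp
      then show ?thesis using True d w(1)[of "dep t q + 2"] by (simp add: f_def)
    next
      case False
      show ?thesis
      proof (cases "q < x")
        case True
        then show ?thesis using False d w(2)[of "Suc (dep t q)"] by (simp add: f_def)
      next
        case False
        then show ?thesis using \<open>\<not> y < x\<close> d w(1)[of "dep t q"] by (simp add: f_def)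
      qed
    qed
  qed
  have "(f p, f x) = (W (D + m), W D)" using px Dm unfolding f_def D_def by simp
  moreover have "(W (D + m), W D) \<notin> E" using W(2) sE by (auto dest: symD)
  ultimately have nf: "(f p, f x) \<notin> E" by simp
  have "\<not> hom E f t'"
  proof
    assume "hom E f t'"
    then have "(f p, f x) \<in> E" using p unfolding hom_def by blast
    then show False using nf by simp
  qed
  then show ?thesis using fV ht by blast
qed

lemma part3:
  assumes EV: "E \<subseteq> V \<times> V" and sE: "sym E"
    and walks: "\<And>m a. 2 \<le> m \<Longrightarrow> \<exists>W :: nat \<Rightarrow> 'a. walk E W \<and> (W a, W (a + m)) \<notin> E"
    and t: "t \<in> B n" and t': "t' \<in> B n" and ne: "t \<noteq> t'"
  shows "\<not> satisfies V E t t'"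
proof -
  obtain x where "x \<in> set (leaves t)" "dep t x \<noteq> dep t' x"
    using dep_inj[OF B_dist[OF t] _ ne] B_leaves[OF t] B_leaves[OF t'] by metis
  then have ex: "\<exists>x. x \<in> {1..n} \<and> dep t x \<noteq> dep t' x" using B_set[OF t] by blast
  define x0 where "x0 = (LEAST x. x \<in> {1..n} \<and> dep t x \<noteq> dep t' x)"
  have x0: "x0 \<in> {1..n}" "dep t x0 \<noteq> dep t' x0"
    using LeastI_ex[OF ex] unfolding x0_def by blast+
  have eq: "\<forall>y\<in>{1..n}. y < x0 \<longrightarrow> dep t y = dep t' y"
    using not_less_Least unfolding x0_def by blast
  have eq': "\<forall>y\<in>{1..n}. y < x0 \<longrightarrow> dep t' y = dep t y" using eq by simp
  have "\<exists>f :: nat \<Rightarrow> 'a. (\<forall>i\<in>{1..n}. f i \<in> V) \<and> \<not> (hom E f t \<longleftrightarrow> hom E f t')"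
  proof (cases "dep t x0 < dep t' x0")
    case True
    then show ?thesis using break[OF EV sE walks t t' x0(1) True eq] by blast
  next
    case False
    then have "dep t' x0 < dep t x0" using x0(2) by simp
    then show ?thesis using break[OF EV sE walks t' t x0(1) _ eq'] by blast
  qed
  then show ?thesis unfolding sat_iff[OF t t'] by blast
qed



theorem proposition7p1:
  fixes V :: "'a set" and E :: "('a \<times> 'a) set"
  assumes "undirected_graph V E"
  shows
    "((\<forall>K \<in> components V E. trivial_comp E K \<or> complete_loops_comp E K) \<longrightarrow>
        (\<forall>n. \<forall>t \<in> B n. \<forall>t' \<in> B n. satisfies V E t t'))
   \<and> (((\<forall>K \<in> components V E. trivial_comp E K \<or> complete_loops_comp E K
                               \<or> complete_bipartite_comp E K)
        \<and> (\<exists>K \<in> components V E. complete_bipartite_comp E K)) \<longrightarrow>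
        (\<forall>n. \<forall>t \<in> B n. \<forall>t' \<in> B n. t \<noteq> t' \<longrightarrow>
              (satisfies V E t t' \<longleftrightarrow> even (M n t t'))))
   \<and> (\<not> (\<forall>K \<in> components V E. trivial_comp E K \<or> complete_loops_comp E K
                               \<or> complete_bipartite_comp E K) \<longrightarrow>
        (\<forall>n. \<forall>t \<in> B n. \<forall>t' \<in> B n. t \<noteq> t' \<longrightarrow> \<not> satisfies V E t t'))"
proof -
  have EV: "E \<subseteq> V \<times> V" and sE: "sym E" using assms unfolding undirected_graph_def by auto
  have I: "(\<forall>K \<in> components V E. trivial_comp E K \<or> complete_loops_comp E K) \<longrightarrow>
        (\<forall>n. \<forall>t \<in> B n. \<forall>t' \<in> B n. satisfies V E t t')"
  proof (intro impI allI ballI)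
    fix n t t'
    assume a: "\<forall>K \<in> components V E. trivial_comp E K \<or> complete_loops_comp E K"
      and t: "t \<in> B n" and t': "t' \<in> B n"
    show "satisfies V E t t'" by (rule part1[OF a t t'])
  qed
  have II: "((\<forall>K \<in> components V E. trivial_comp E K \<or> complete_loops_comp E K
                               \<or> complete_bipartite_comp E K)
        \<and> (\<exists>K \<in> components V E. complete_bipartite_comp E K)) \<longrightarrow>
        (\<forall>n. \<forall>t \<in> B n. \<forall>t' \<in> B n. t \<noteq> t' \<longrightarrow>
              (satisfies V E t t' \<longleftrightarrow> even (M n t t')))"
  proof (intro impI allI ballI)
    fix n t t'
    assume H: "(\<forall>K \<in> components V E. trivial_comp E K \<or> complete_loops_comp E K
                               \<or> complete_bipartite_comp E K)
        \<and> (\<exists>K \<in> components V E. complete_bipartite_comp E K)"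
      and t: "t \<in> B n" and t': "t' \<in> B n" and ne: "t \<noteq> t'"
    have n: "2 \<le> n" using B_small[OF t t'] ne by linarith
    obtain K0 where K0: "K0 \<in> components V E" "complete_bipartite_comp E K0" using H by blast
    show "satisfies V E t t' \<longleftrightarrow> even (M n t t')"
    proof
      assume "satisfies V E t t'"
      then have "PC n t t'" using sat_PC[OF EV sE K0 t t'] by blast
      then show "even (M n t t')" using M_PC[OF t t'] by blast
    next
      assume "even (M n t t')"
      then have pc: "PC n t t'" using M_PC[OF t t'] by blast
      then have pc': "PC n t' t" unfolding PC_def by blast
      show "satisfies V E t t'" unfolding sat_iff[OF t t']
        using transfer_lem[OF conjunct1[OF H] t t' n pc] transfer_lem[OF conjunct1[OF H] t' t n pc']
        by blast
    qed
  qed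
  have III: "\<not> (\<forall>K \<in> components V E. trivial_comp E K \<or> complete_loops_comp E K
                               \<or> complete_bipartite_comp E K) \<longrightarrow>
        (\<forall>n. \<forall>t \<in> B n. \<forall>t' \<in> B n. t \<noteq> t' \<longrightarrow> \<not> satisfies V E t t')"
  proof (intro impI allI ballI)
    fix n t t'
    assume H: "\<not> (\<forall>K \<in> components V E. trivial_comp E K \<or> complete_loops_comp E K
                               \<or> complete_bipartite_comp E K)"
      and t: "t \<in> B n" and t': "t' \<in> B n" and ne: "t \<noteq> t'"
    obtain K where K: "K \<in> components V E"
      "\<not> (trivial_comp E K \<or> complete_loops_comp E K \<or> complete_bipartite_comp E K)"
      using H by blast
    obtain v where v0: "v \<in> V" "K = component E v" using K(1) unfolding components_def by (rule imageE)
    have v: "v \<in> V" "\<not> trivial_comp E (component E v)"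
      "\<not> complete_loops_comp E (component E v)" "\<not> complete_bipartite_comp E (component E v)"
      using v0 K(2) by simp_all
    interpret bc: badcomp V E v using EV sE v by unfold_locales
    show "\<not> satisfies V E t t'" using part3[OF EV sE bc.bad_walk t t' ne] by blast
  qed
  show ?thesis by (intro conjI I II III)
qed

end
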